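(* Consider the errorless symmetric relay network described in the context, with a fixed time horizon $T\ge 1$. A policy $\pi^*$ is optimal, i.e. it minimizes $\frac{1}{TK}\sum_{t=1}^T\sum_{k=1}^K h_k^{\pi}(t)$ over all policies $\pi$, if and only if $\pi^*$ satisfies both \[ \sum_{t=1}^{T}\sum_{\tau=1}^{t-2} R(\mathcal{S}^{\pi^*}(\tau)) = \max_{\pi}\sum_{t=1}^{T}\sum_{\tau=1}^{t-2} R(\mathcal{S}^{\pi}(\tau)) \] and \[ \sum_{\tau=1}^{t-1} R(\mathcal{S}^{\pi^*}(\tau)) = \sum_{\tau=1}^{t} R(\mathcal{U}^{\pi^*}(\tau)) \quad\text{for all time slots } t . \]
   Context: Fix integers $K\ge 2$ and $S,U$ with $1\le S<K$, $1\le U<K$, and $S=U$. There are $K$ processes indexed by $k\in\{1,\dots,K\}$ (sensor $k$ feeds destination $k$ through a single relay), and time slots $t=1,2,\dots$. The state at time $t$ consists of the relay AoI values $g_k(t)$ and the destination AoI values $h_k(t)$, with initial values $g_k(1)=h_k(1)=1$ for all $k$. A policy $\pi$ is a map assigning to the current state $(\{g_k(t)\}_k,\{h_k(t)\}_k)$ a pair $(\mathcal{S}^{\pi}(t),\mathcal{U}^{\pi}(t))$ of subsets of $\{1,\dots,K\}$ with $|\mathcal{S}^{\pi}(t)|=S$ (sensors sampled) and $|\mathcal{U}^{\pi}(t)|=U$ (destinations updated). Errorless dynamics: $g_k(t+1)=1$ if $k\in\mathcal{S}(t)$ and $g_k(t+1)=g_k(t)+1$ otherwise; $h_k(t+1)=g_k(t)+1$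 if $k\in\mathcal{U}(t)$ and $h_k(t+1)=h_k(t)+1$ otherwise. Write $g_k^\pi(t),h_k^\pi(t)$ for the resulting sequences under $\pi$. Define the reductions $R(\mathcal{S}^{\pi}(\tau))=\sum_{k\in\mathcal{S}^{\pi}(\tau)} g_k^{\pi}(\tau)$ and $R(\mathcal{U}^{\pi}(\tau))=\sum_{k\in\mathcal{U}^{\pi}(\tau)}\big(h_k^{\pi}(\tau)-g_k^{\pi}(\tau)\big)$; empty sums are $0$. *)

theory Defs
  imports Complex_Main
begin

text \<open>Processes are indexed by naturals; only indices in the range 1..K matter.
  A state is a pair (g, h) of relay AoI and destination AoI vectors.
  A policy maps the current state to the pair (sampled set, updated set).\<close>

type_synonym aoi_state = "(nat \<Rightarrow> nat) \<times> (nat \<Rightarrow> nat)"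
type_synonym policy = "(nat \<Rightarrow> nat) \<Rightarrow> (nat \<Rightarrow> nat) \<Rightarrow> nat set \<times> nat set"

definition valid_policy :: "nat \<Rightarrow> nat \<Rightarrow> nat \<Rightarrow> policy \<Rightarrow> bool" where
  "valid_policy K S U \<pi> \<longleftrightarrow>
     (\<forall>g h. fst (\<pi> g h) \<subseteq> {1..K} \<and> card (fst (\<pi> g h)) = S \<and>
            snd (\<pi> g h) \<subseteq> {1..K} \<and> card (snd (\<pi> g h)) = U)"

text \<open>Errorless dynamics; st pi n is the state at time slot n+1.\<close>
fun st :: "policy \<Rightarrow> nat \<Rightarrow> aoi_state" where
  "st \<pi> 0 = (\<lambda>_. 1, \<lambda>_. 1)"
| "st \<pi> (Suc n) =
     (let g = fst (st \<pi> n); h = snd (st \<pi> n);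
          Ss = fst (\<pi> g h); Us = snd (\<pi> g h)
      in (\<lambda>k. if k \<in> Ss then 1 else g k + 1,
          \<lambda>k. if k \<in> Us then g k + 1 else h k + 1))"

definition gA :: "policy \<Rightarrow> nat \<Rightarrow> nat \<Rightarrow> nat" where
  "gA \<pi> t = fst (st \<pi> (t - 1))"

definition hA :: "policy \<Rightarrow> nat \<Rightarrow> nat \<Rightarrow> nat" where
  "hA \<pi> t = snd (st \<pi> (t - 1))"

definition sampled :: "policy \<Rightarrow> nat \<Rightarrow> nat set" where
  "sampled \<pi> t = fst (\<pi> (gA \<pi> t) (hA \<pi> t))"

definition updated :: "policy \<Rightarrow> nat \<Rightarrow> nat set" where
  "updated \<pi> t = snd (\<pi> (gA \<pi> t) (hA \<pi> t))"

definition RS :: "policy \<Rightarrow> nat \<Rightarrow> int" where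
  "RS \<pi> \<tau> = (\<Sum>k\<in>sampled \<pi> \<tau>. int (gA \<pi> \<tau> k))"

definition RU :: "policy \<Rightarrow> nat \<Rightarrow> int" where
  "RU \<pi> \<tau> = (\<Sum>k\<in>updated \<pi> \<tau>. int (hA \<pi> \<tau> k) - int (gA \<pi> \<tau> k))"

definition avg_aoi :: "nat \<Rightarrow> nat \<Rightarrow> policy \<Rightarrow> real" where
  "avg_aoi K T \<pi> = (1 / (real T * real K)) * (\<Sum>t=1..T. \<Sum>k=1..K. real (hA \<pi> t k))"

definition cum_RS :: "nat \<Rightarrow> policy \<Rightarrow> int" where
  "cum_RS T \<pi> = (\<Sum>t=1..T. \<Sum>\<tau>=1..t - 2. RS \<pi> \<tau>)"

end

theory Submission
  imports Defs
begin

lemma st_fst_Suc: "fst (st p (Suc n)) = (\<lambda>k. if k \<in> fst (p (fst (st p n)) (snd (st p n))) then 1 else fst (st p n) k + 1)"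
  by (simp add: Let_def)

lemma st_snd_Suc: "snd (st p (Suc n)) = (\<lambda>k. if k \<in> snd (p (fst (st p n)) (snd (st p n))) then fst (st p n) k + 1 else snd (st p n) k + 1)"
  by (simp add: Let_def)

lemma gA_Suc: "gA p (Suc n) = fst (st p n)" by (simp add: gA_def)
lemma hA_Suc: "hA p (Suc n) = snd (st p n)" by (simp add: hA_def)
lemma sampled_Suc: "sampled p (Suc n) = fst (p (fst (st p n)) (snd (st p n)))"
  by (simp add: sampled_def gA_def hA_def)
lemma updated_Suc: "updated p (Suc n) = snd (p (fst (st p n)) (snd (st p n)))"
  by (simp add: updated_def gA_def hA_def)

lemma g_le_h: "fst (st p n) k \<le> snd (st p n) k"
  by (induction n) (auto simp: Let_def)

lemma g_bound: "fst (st p n) k \<le> Suc n"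
  by (induction n) (auto simp: Let_def)

lemma sum_if_split:
  fixes f :: "nat \<Rightarrow> int"
  assumes "A \<subseteq> {1..K}"
  shows "(\<Sum>k=1..K. (if k \<in> A then c k else f k)) = (\<Sum>k=1..K. f k) - (\<Sum>k\<in>A. f k) + (\<Sum>k\<in>A. c k)"
proof -
  have fin: "finite A" using assms finite_subset by blast
  have "(\<Sum>k=1..K. (if k \<in> A then c k else f k)) = (\<Sum>k\<in>A. c k) + (\<Sum>k\<in>{1..K} - A. f k)"
    using sum.subset_diff[OF assms, of "\<lambda>k. if k \<in> A then c k else f k"] by auto
  moreover have "(\<Sum>k=1..K. f k) = (\<Sum>k\<in>{1..K} - A. f k) + (\<Sum>k\<in>A. f k)"
    using sum.subset_diff[OF assms, of f] by auto
  ultimately show ?thesis by simp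
qed

lemma G_step:
  assumes "valid_policy K S U p"
  shows "(\<Sum>k=1..K. int (fst (st p (Suc n)) k)) = (\<Sum>k=1..K. int (fst (st p n) k)) + int K - RS p (Suc n)"
proof -
  let ?A = "fst (p (fst (st p n)) (snd (st p n)))"
  have A: "?A \<subseteq> {1..K}" using assms unfolding valid_policy_def by blast
  have "(\<Sum>k=1..K. int (fst (st p (Suc n)) k)) = (\<Sum>k=1..K. if k \<in> ?A then 1 else int (fst (st p n) k) + 1)"
    unfolding st_fst_Suc by (intro sum.cong) auto
  also have "\<dots> = (\<Sum>k=1..K. int (fst (st p n) k) + 1) - (\<Sum>k\<in>?A. int (fst (st p n) k) + 1) + (\<Sum>k\<in>?A. 1)"
    by (rule sum_if_split[OF A])
  also have "\<dots> = (\<Sum>k=1..K. int (fst (st p n) k)) + int K - (\<Sum>k\<in>?A. int (fst (st p n) k))"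
    by (simp add: sum.distrib)
  finally show ?thesis by (simp add: RS_def sampled_Suc gA_Suc)
qed

lemma H_step:
  assumes "valid_policy K S U p"
  shows "(\<Sum>k=1..K. int (snd (st p (Suc n)) k)) = (\<Sum>k=1..K. int (snd (st p n) k)) + int K - RU p (Suc n)"
proof -
  let ?A = "snd (p (fst (st p n)) (snd (st p n)))"
  have A: "?A \<subseteq> {1..K}" using assms unfolding valid_policy_def by blast
  have "(\<Sum>k=1..K. int (snd (st p (Suc n)) k)) = (\<Sum>k=1..K. if k \<in> ?A then int (fst (st p n) k) + 1 else int (snd (st p n) k) + 1)"
    unfolding st_snd_Suc by (intro sum.cong) auto
  also have "\<dots> = (\<Sum>k=1..K. int (snd (st p n) k) + 1) - (\<Sum>k\<in>?A. int (snd (st p n) k) + 1) + (\<Sum>k\<in>?A. int (fst (st p n) k) + 1)"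
    by (rule sum_if_split[OF A])
  also have "\<dots> = (\<Sum>k=1..K. int (snd (st p n) k)) + int K - (\<Sum>k\<in>?A. int (snd (st p n) k) - int (fst (st p n) k))"
    by (simp add: sum.distrib sum_subtractf)
  finally show ?thesis by (simp add: RU_def updated_Suc gA_Suc hA_Suc)
qed

lemma G_closed:
  assumes "valid_policy K S U p"
  shows "(\<Sum>k=1..K. int (fst (st p n) k)) = int K + int n * int K - (\<Sum>\<tau>=1..n. RS p \<tau>)"
proof (induction n)
  case (Suc n)
  show ?case unfolding G_step[OF assms] Suc by (simp add: algebra_simps)
qed simp

lemma H_closed:
  assumes "valid_policy K S U p"
  shows "(\<Sum>k=1..K. int (snd (st p n) k)) = int K + int n * int K - (\<Sum>\<tau>=1..n. RU p \<tau>)"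
proof (induction n)
  case (Suc n)
  show ?case unfolding H_step[OF assms] Suc by (simp add: algebra_simps)
qed simp

lemma D_closed:
  assumes "valid_policy K S U p"
  shows "(\<Sum>k=1..K. int (snd (st p n) k) - int (fst (st p n) k)) = (\<Sum>\<tau>=1..n. RS p \<tau>) - (\<Sum>\<tau>=1..n. RU p \<tau>)"
  unfolding sum_subtractf G_closed[OF assms] H_closed[OF assms] by simp

lemma RU_le_D:
  assumes "valid_policy K S U p"
  shows "RU p (Suc n) \<le> (\<Sum>k=1..K. int (snd (st p n) k) - int (fst (st p n) k))"
proof -
  have A: "snd (p (fst (st p n)) (snd (st p n))) \<subseteq> {1..K}" using assms unfolding valid_policy_def by blast
  show ?thesis unfolding RU_def updated_Suc gA_Suc hA_Suc
    by (rule sum_mono2[OF _ A]) (auto simp: g_le_h)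
qed

lemma RU_RS_le:
  assumes "valid_policy K S U p"
  shows "(\<Sum>\<tau>=1..Suc n. RU p \<tau>) \<le> (\<Sum>\<tau>=1..n. RS p \<tau>)"
  using RU_le_D[OF assms, of n] D_closed[OF assms, of n] by simp

lemma grd_exists:
  fixes g :: "nat \<Rightarrow> nat"
  assumes "S \<le> K"
  shows "\<exists>A. A \<subseteq> {1..K} \<and> card A = S \<and> (\<forall>i\<in>A. \<forall>j\<in>{1..K}-A. g j \<le> g i)"
proof -
  define C where "C = {A. A \<subseteq> {1..K} \<and> card A = S}"
  have finC: "finite C" unfolding C_def
    by (rule finite_subset[of _ "Pow {1..K}"]) auto
  obtain A0 where "A0 \<subseteq> {1..K}" "card A0 = S"
    using obtain_subset_with_card_n[of S "{1..K}"] assms by auto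
  then have neC: "C \<noteq> {}" unfolding C_def by blast
  define f where "f A = (\<Sum>i\<in>A. g i)" for A
  obtain A where AC: "A \<in> C" and Amax: "\<forall>B\<in>C. f B \<le> f A"
  proof -
    have "Max (f ` C) \<in> f ` C" using finC neC by simp
    then obtain A where "A \<in> C" "f A = Max (f ` C)" by auto
    moreover have "\<forall>B\<in>C. f B \<le> Max (f ` C)" using finC by simp
    ultimately show ?thesis using that by auto
  qed
  have "\<forall>i\<in>A. \<forall>j\<in>{1..K}-A. g j \<le> g i"
  proof (intro ballI, rule ccontr)
    fix i j assume i: "i \<in> A" and j: "j \<in> {1..K} - A" and "\<not> g j \<le> g i"
    then have lt: "g i < g j" by simp
    define B where "B = insert j (A - {i})"
    have finA: "finite A" using AC unfolding C_def using finite_subset by blast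
    have "card A > 0" using i finA card_gt_0_iff by blast
    then have "B \<in> C" using AC i j finA unfolding B_def C_def by (auto simp: card_insert_if)
    moreover have "f B = f A - g i + g j"
    proof -
      have "f A = g i + f (A - {i})" unfolding f_def using i finA by (simp add: sum.remove)
      moreover have "f B = g j + f (A - {i})" unfolding f_def B_def using j finA by simp
      ultimately show ?thesis by simp
    qed
    moreover have "f A \<ge> g i" unfolding f_def using i finA by (simp add: member_le_sum)
    ultimately show False using Amax lt by fastforce
  qed
  then show ?thesis using AC unfolding C_def by blast
qed

definition grd :: "nat \<Rightarrow> nat \<Rightarrow> (nat \<Rightarrow> nat) \<Rightarrow> nat set" where
  "grd K S g = (SOME A. A \<subseteq> {1..K} \<and> card A = S \<and> (\<forall>i\<in>A. \<forall>j\<in>{1..K}-A. g j \<le> g i))"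

lemma grd_props:
  assumes "S \<le> K"
  shows "grd K S g \<subseteq> {1..K}" "card (grd K S g) = S"
    "\<And>i j. i \<in> grd K S g \<Longrightarrow> j \<in> {1..K} - grd K S g \<Longrightarrow> g j \<le> g i"
  using someI_ex[OF grd_exists[OF assms, of g]] unfolding grd_def by blast+

definition pstar :: "nat \<Rightarrow> nat \<Rightarrow> policy" where
  "pstar K S g h = (grd K S g,
     if card {k\<in>{1..K}. g k = 1} = S then {k\<in>{1..K}. g k = 1} else grd K S g)"

lemma pstar_valid:
  assumes "S \<le> K"
  shows "valid_policy K S S (pstar K S)"
  unfolding valid_policy_def pstar_def using grd_props[OF assms] by auto

definition cnt :: "nat \<Rightarrow> (nat \<Rightarrow> nat) \<Rightarrow> nat \<Rightarrow> nat" where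
  "cnt K g m = card {k\<in>{1..K}. m \<le> g k}"

lemma cnt_step_eq:
  assumes "A \<subseteq> {1..K}" "2 \<le> m"
  shows "cnt K (\<lambda>k. if k \<in> A then 1 else g k + 1) m = card {k\<in>{1..K} - A. m - 1 \<le> g k}"
  unfolding cnt_def using assms by (intro arg_cong[where f=card]) auto

lemma cnt_step_small:
  assumes "m \<le> 1"
  shows "cnt K (\<lambda>k. if k \<in> A then 1 else g k + 1) m = K"
proof -
  have "{k\<in>{1..K}. m \<le> (\<lambda>k. if k \<in> A then 1 else g k + 1) k} = {1..K}" using assms by auto
  then show ?thesis unfolding cnt_def by simp
qed

lemma cnt_general:
  assumes "A \<subseteq> {1..K}" "card A = S"
  shows "cnt K g x - S \<le> card {k\<in>{1..K} - A. x \<le> g k}"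
proof -
  have "{k\<in>{1..K}. x \<le> g k} \<subseteq> {k\<in>{1..K} - A. x \<le> g k} \<union> A" by auto
  then have "cnt K g x \<le> card ({k\<in>{1..K} - A. x \<le> g k} \<union> A)"
    unfolding cnt_def using assms(1) finite_subset by (intro card_mono) auto
  also have "\<dots> \<le> card {k\<in>{1..K} - A. x \<le> g k} + card A" by (rule card_Un_le)
  finally show ?thesis using assms by simp
qed

lemma cnt_greedy:
  assumes "S \<le> K"
  shows "card {k\<in>{1..K} - grd K S g. x \<le> g k} = cnt K g x - S"
proof -
  let ?A = "grd K S g"
  note P = grd_props[OF assms, where g=g]
  have finA: "finite ?A" using P(1) finite_subset by blast
  let ?X = "{k\<in>{1..K}. x \<le> g k}"
  show ?thesis
  proof (cases "S \<le> cnt K g x")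
    case True
    have sub: "?A \<subseteq> ?X"
    proof (rule ccontr)
      assume "\<not> ?A \<subseteq> ?X"
      then obtain i where i1: "i \<in> ?A" and i2: "i \<notin> ?X" by blast
      have i: "i \<in> ?A" "g i < x" using i1 i2 P(1) by auto
      have "?X \<subseteq> ?A - {i}"
      proof
        fix j assume j: "j \<in> ?X"
        show "j \<in> ?A - {i}"
        proof (rule ccontr)
          assume "j \<notin> ?A - {i}"
          then have c: "j \<in> {1..K} - ?A \<or> j = i" using j by auto
          have xj: "x \<le> g j" using j by simp
          show False
          proof (cases "j = i")
            case True then show False using xj i(2) by simp
          next
            case False
            then have "j \<in> {1..K} - ?A" using c by simp
            then have "g j \<le> g i" by (rule P(3)[OF i(1)])
            then show False using xj i(2) by simp
          qed
        qed
      qed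
      then have "card ?X \<le> card (?A - {i})" using finA by (intro card_mono) auto
      also have "\<dots> = S - 1" using i P(2) finA by simp
      finally show False using True i(1) P(2) finA
        unfolding cnt_def by (cases S) (auto simp: card_gt_0_iff)
    qed
    have "{k\<in>{1..K} - ?A. x \<le> g k} = ?X - ?A" by auto
    then have "card {k\<in>{1..K} - ?A. x \<le> g k} = card ?X - card ?A"
      using sub finA by (simp add: card_Diff_subset)
    then show ?thesis using P(2) unfolding cnt_def by simp
  next
    case False
    have "{k\<in>{1..K} - ?A. x \<le> g k} = {}"
    proof (rule ccontr)
      assume "{k\<in>{1..K} - ?A. x \<le> g k} \<noteq> {}"
      then obtain j where j: "j \<in> {1..K} - ?A" "x \<le> g j" by auto
      have "insert j ?A \<subseteq> ?X" using P(1) P(3) j by fastforce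
      then have "card (insert j ?A) \<le> card ?X" by (intro card_mono) auto
      then show False using False j finA P(2) unfolding cnt_def by simp
    qed
    then show ?thesis using False by simp
  qed
qed

lemma pstar_fst: "fst (pstar K S g h) = grd K S g" by (simp add: pstar_def)

lemma dominance:
  assumes "S \<le> K" "valid_policy K S U p"
  shows "cnt K (fst (st (pstar K S) n)) m \<le> cnt K (fst (st p n)) m"
proof (induction n arbitrary: m)
  case 0
  then show ?case by simp
next
  case (Suc n)
  let ?g = "fst (st (pstar K S) n)" and ?h = "snd (st (pstar K S) n)"
  let ?g2 = "fst (st p n)" and ?h2 = "snd (st p n)"
  let ?A = "grd K S ?g" and ?B = "fst (p ?g2 ?h2)"
  have e1: "fst (st (pstar K S) (Suc n)) = (\<lambda>k. if k \<in> ?A then 1 else ?g k + 1)"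
    unfolding st_fst_Suc pstar_fst ..
  have e2: "fst (st p (Suc n)) = (\<lambda>k. if k \<in> ?B then 1 else ?g2 k + 1)"
    unfolding st_fst_Suc ..
  have B: "?B \<subseteq> {1..K}" "card ?B = S" using assms(2) unfolding valid_policy_def by blast+
  have A: "?A \<subseteq> {1..K}" using grd_props[OF assms(1)] by blast
  show ?case
  proof (cases "m \<le> 1")
    case True
    then show ?thesis unfolding e1 e2 cnt_step_small[OF True] by simp
  next
    case False
    then have m2: "2 \<le> m" by simp
    have "cnt K (fst (st (pstar K S) (Suc n))) m = cnt K ?g (m - 1) - S"
      unfolding e1 cnt_step_eq[OF A m2] cnt_greedy[OF assms(1)] ..
    also have "\<dots> \<le> cnt K ?g2 (m - 1) - S" using Suc.IH[of "m - 1"] by simp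
    also have "\<dots> \<le> cnt K (fst (st p (Suc n))) m"
      unfolding e2 cnt_step_eq[OF B(1) m2] by (rule cnt_general[OF B])
    finally show ?thesis .
  qed
qed

lemma sum_ind_card: "(\<Sum>k\<in>A. (if P k then 1 else 0 :: nat)) = card {k\<in>A. P k}" if "finite A" for A P
  using that by (simp add: sum.If_cases Int_def)

lemma layer:
  assumes "\<forall>k\<in>{1..K}. g k \<le> M"
  shows "(\<Sum>k=1..K. g k) = (\<Sum>m=1..M. cnt K g m)"
proof -
  have "(\<Sum>m=1..M. cnt K g m) = (\<Sum>m=1..M. \<Sum>k=1..K. (if m \<le> g k then 1 else 0 :: nat))"
    unfolding cnt_def by (simp add: sum_ind_card)
  also have "\<dots> = (\<Sum>k=1..K. \<Sum>m=1..M. (if m \<le> g k then 1 else 0 :: nat))"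
    by (rule sum.swap)
  also have "\<dots> = (\<Sum>k=1..K. g k)"
  proof (rule sum.cong[OF refl])
    fix k assume k: "k \<in> {1..K}"
    have c1: "(\<Sum>m=1..M. (if m \<le> g k then 1 else 0 :: nat)) = card {m\<in>{1..M}. m \<le> g k}"
      by (simp add: sum_ind_card)
    have gk: "g k \<le> M" using assms k by blast
    have c2: "{m\<in>{1..M}. m \<le> g k} = {1..g k}" using gk by auto
    show "(\<Sum>m=1..M. (if m \<le> g k then 1 else 0 :: nat)) = g k" unfolding c1 c2 by simp
  qed
  finally show ?thesis by simp
qed

lemma G_compare:
  assumes "S \<le> K" "valid_policy K S U p"
  shows "(\<Sum>k=1..K. int (fst (st (pstar K S) n) k)) \<le> (\<Sum>k=1..K. int (fst (st p n) k))"
proof -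
  have "(\<Sum>k=1..K. fst (st (pstar K S) n) k) = (\<Sum>m=1..Suc n. cnt K (fst (st (pstar K S) n)) m)"
    by (rule layer) (simp add: g_bound)
  also have "\<dots> \<le> (\<Sum>m=1..Suc n. cnt K (fst (st p n)) m)"
    by (rule sum_mono) (rule dominance[OF assms])
  also have "\<dots> = (\<Sum>k=1..K. fst (st p n) k)"
    by (rule layer[symmetric]) (simp add: g_bound)
  finally show ?thesis by (simp flip: of_nat_sum)
qed

lemma RS_compare:
  assumes "S \<le> K" "valid_policy K S U p"
  shows "(\<Sum>\<tau>=1..n. RS p \<tau>) \<le> (\<Sum>\<tau>=1..n. RS (pstar K S) \<tau>)"
  using G_compare[OF assms, of n] G_closed[OF assms(2), of n]
    G_closed[OF pstar_valid[OF assms(1)], of n] by simp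

lemma g_pos: "1 \<le> fst (st p n) k"
  by (induction n) (auto simp: Let_def)

lemma ones:
  assumes "valid_policy K S U p"
  shows "{k\<in>{1..K}. fst (st p (Suc n)) k = 1} = fst (p (fst (st p n)) (snd (st p n)))"
proof -
  have A: "fst (p (fst (st p n)) (snd (st p n))) \<subseteq> {1..K}" using assms unfolding valid_policy_def by blast
  have nz: "(fst (st p n) k = 0) = False" for k using g_pos[of p n k] by simp
  show ?thesis unfolding st_fst_Suc using A by (auto simp: nz)
qed

lemma pstar_snd:
  assumes "S \<le> K" "1 \<le> n"
  shows "snd (pstar K S (fst (st (pstar K S) n)) (snd (st (pstar K S) n))) = {k\<in>{1..K}. fst (st (pstar K S) n) k = 1}"
proof -
  obtain n' where n: "n = Suc n'" using assms(2) by (cases n) auto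
  have "{k\<in>{1..K}. fst (st (pstar K S) n) k = 1} = grd K S (fst (st (pstar K S) n'))"
    unfolding n ones[OF pstar_valid[OF assms(1)]] pstar_fst ..
  then have "card {k\<in>{1..K}. fst (st (pstar K S) n) k = 1} = S" using grd_props[OF assms(1)] by simp
  then show ?thesis unfolding pstar_def by simp
qed

lemma pstar_inv:
  assumes "S \<le> K"
  shows "k \<in> {1..K} \<Longrightarrow> snd (st (pstar K S) n) k \<noteq> fst (st (pstar K S) n) k \<Longrightarrow> 1 \<le> n \<and> fst (st (pstar K S) n) k = 1"
proof (induction n)
  case 0
  then show ?case by simp
next
  case (Suc n)
  let ?g = "fst (st (pstar K S) n)" and ?h = "snd (st (pstar K S) n)"
  let ?Ss = "fst (pstar K S ?g ?h)" and ?Us = "snd (pstar K S ?g ?h)"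
  have e1: "fst (st (pstar K S) (Suc n)) = (\<lambda>k. if k \<in> ?Ss then 1 else ?g k + 1)"
    unfolding st_fst_Suc ..
  have e2: "snd (st (pstar K S) (Suc n)) = (\<lambda>k. if k \<in> ?Us then ?g k + 1 else ?h k + 1)"
    unfolding st_snd_Suc ..
  show ?case
  proof (cases "k \<in> ?Ss")
    case True
    then show ?thesis unfolding e1 by simp
  next
    case F: False
    show ?thesis
    proof (cases "k \<in> ?Us")
      case True
      then show ?thesis using Suc.prems(2) F unfolding e1 e2 by simp
    next
      case False
      then have "?h k \<noteq> ?g k" using Suc.prems(2) F unfolding e1 e2 by simp
      then have "1 \<le> n \<and> ?g k = 1" using Suc.IH Suc.prems(1) by blast
      then have "k \<in> ?Us" using pstar_snd[OF assms] Suc.prems(1) by auto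
      then show ?thesis using False by simp
    qed
  qed
qed

lemma pstar_eq:
  assumes "S \<le> K"
  shows "(\<Sum>\<tau>=1..Suc n. RU (pstar K S) \<tau>) = (\<Sum>\<tau>=1..n. RS (pstar K S) \<tau>)"
proof -
  let ?p = "pstar K S"
  let ?g = "fst (st ?p n)" and ?h = "snd (st ?p n)"
  let ?Us = "snd (?p ?g ?h)"
  have V: "valid_policy K S S ?p" by (rule pstar_valid[OF assms])
  have U: "?Us \<subseteq> {1..K}" using V unfolding valid_policy_def by blast
  have "RU ?p (Suc n) = (\<Sum>k\<in>?Us. int (?h k) - int (?g k))"
    unfolding RU_def updated_Suc gA_Suc hA_Suc ..
  also have "\<dots> = (\<Sum>k=1..K. int (?h k) - int (?g k))"
  proof (rule sum.mono_neutral_left[OF _ U])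
    show "\<forall>i\<in>{1..K} - ?Us. int (?h i) - int (?g i) = 0"
    proof
      fix i assume i: "i \<in> {1..K} - ?Us"
      show "int (?h i) - int (?g i) = 0"
      proof (rule ccontr)
        assume "int (?h i) - int (?g i) \<noteq> 0"
        then have "?h i \<noteq> ?g i" by simp
        then have "1 \<le> n \<and> ?g i = 1" using pstar_inv[OF assms] i by blast
        then have "i \<in> ?Us" using pstar_snd[OF assms] i by auto
        then show False using i by simp
      qed
    qed
  qed simp
  finally show ?thesis using D_closed[OF V, of n] by simp
qed

definition Fv :: "nat \<Rightarrow> policy \<Rightarrow> int" where
  "Fv T p = (\<Sum>t=1..T. \<Sum>\<tau>=1..t - 1. RU p \<tau>)"

lemma hsum:
  assumes "valid_policy K S U p"
  shows "(\<Sum>t=1..T. \<Sum>k=1..K. real (hA p t k)) =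
    real_of_int (\<Sum>t=1..T. (int K + int (t - 1) * int K)) - real_of_int (Fv T p)"
proof -
  have "(\<Sum>t=1..T. \<Sum>k=1..K. real (hA p t k)) =
        (\<Sum>t=1..T. real_of_int (int K + int (t - 1) * int K - (\<Sum>\<tau>=1..t - 1. RU p \<tau>)))"
  proof (rule sum.cong[OF refl])
    fix t
    have "(\<Sum>k=1..K. real (hA p t k)) = real_of_int (\<Sum>k=1..K. int (snd (st p (t - 1)) k))"
      unfolding hA_def of_int_sum by simp
    also have "\<dots> = real_of_int (int K + int (t - 1) * int K - (\<Sum>\<tau>=1..t - 1. RU p \<tau>))"
      unfolding H_closed[OF assms] ..
    finally show "(\<Sum>k=1..K. real (hA p t k)) = real_of_int (int K + int (t - 1) * int K - (\<Sum>\<tau>=1..t - 1. RU p \<tau>))" .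
  qed
  also have "\<dots> = real_of_int (\<Sum>t=1..T. (int K + int (t - 1) * int K - (\<Sum>\<tau>=1..t - 1. RU p \<tau>)))"
    unfolding of_int_sum ..
  also have "\<dots> = real_of_int (\<Sum>t=1..T. (int K + int (t - 1) * int K)) - real_of_int (Fv T p)"
    unfolding Fv_def sum_subtractf by simp
  finally show ?thesis .
qed

lemma avg_iff:
  assumes "valid_policy K S U p" "valid_policy K S U q" "T \<ge> 1" "K \<ge> 1"
  shows "avg_aoi K T p \<le> avg_aoi K T q \<longleftrightarrow> Fv T q \<le> Fv T p"
proof -
  have c: "1 / (real T * real K) > 0" using assms(3,4) by simp
  show ?thesis unfolding avg_aoi_def hsum[OF assms(1)] hsum[OF assms(2)]
    using mult_le_cancel_left_pos[OF c] by simp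
qed

lemma term_le:
  assumes "valid_policy K S U p"
  shows "(\<Sum>\<tau>=1..t - 1. RU p \<tau>) \<le> (\<Sum>\<tau>=1..t - 2. RS p \<tau>)"
proof (cases "t \<le> 1")
  case True
  then show ?thesis by simp
next
  case False
  then have "t - 1 = Suc (t - 2)" by simp
  then show ?thesis using RU_RS_le[OF assms, of "t - 2"] by simp
qed

lemma F_le:
  assumes "valid_policy K S U p"
  shows "Fv T p \<le> cum_RS T p"
  unfolding Fv_def cum_RS_def by (rule sum_mono) (rule term_le[OF assms])

lemma F_eq_iff:
  assumes "valid_policy K S U p"
  shows "Fv T p = cum_RS T p \<longleftrightarrow>
    (\<forall>t\<in>{1..T - 1}. (\<Sum>\<tau>=1..t - 1. RS p \<tau>) = (\<Sum>\<tau>=1..t. RU p \<tau>))"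
proof -
  let ?a = "\<lambda>t. (\<Sum>\<tau>=1..t - 1. RU p \<tau>)" and ?b = "\<lambda>t. (\<Sum>\<tau>=1..t - 2. RS p \<tau>)"
  have "Fv T p = cum_RS T p \<longleftrightarrow> (\<Sum>t=1..T. ?b t - ?a t) = 0"
    unfolding Fv_def cum_RS_def sum_subtractf by linarith
  also have "\<dots> \<longleftrightarrow> (\<forall>t\<in>{1..T}. ?b t - ?a t = 0)"
  proof (rule sum_nonneg_eq_0_iff)
    fix x show "0 \<le> ?b x - ?a x" using term_le[OF assms, of x] by linarith
  qed simp
  also have "\<dots> \<longleftrightarrow> (\<forall>t\<in>{1..T - 1}. (\<Sum>\<tau>=1..t - 1. RS p \<tau>) = (\<Sum>\<tau>=1..t. RU p \<tau>))"
  proof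
    assume H: "\<forall>t\<in>{1..T}. ?b t - ?a t = 0"
    show "\<forall>t\<in>{1..T - 1}. (\<Sum>\<tau>=1..t - 1. RS p \<tau>) = (\<Sum>\<tau>=1..t. RU p \<tau>)"
    proof
      fix t assume t: "t \<in> {1..T - 1}"
      then have "Suc t \<in> {1..T}" by auto
      then have "?b (Suc t) - ?a (Suc t) = 0" using H by blast
      then show "(\<Sum>\<tau>=1..t - 1. RS p \<tau>) = (\<Sum>\<tau>=1..t. RU p \<tau>)" by simp
    qed
  next
    assume H: "\<forall>t\<in>{1..T - 1}. (\<Sum>\<tau>=1..t - 1. RS p \<tau>) = (\<Sum>\<tau>=1..t. RU p \<tau>)"
    show "\<forall>t\<in>{1..T}. ?b t - ?a t = 0"
    proof
      fix t assume t: "t \<in> {1..T}"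
      show "?b t - ?a t = 0"
      proof (cases "t = 1")
        case True then show ?thesis by simp
      next
        case False
        then have t1: "t - 1 \<in> {1..T - 1}" using t by auto
        have e: "t - 2 = t - 1 - 1" by simp
        have "(\<Sum>\<tau>=1..t - 1 - 1. RS p \<tau>) = (\<Sum>\<tau>=1..t - 1. RU p \<tau>)" using H t1 by blast
        then show ?thesis unfolding e by simp
      qed
    qed
  qed
  finally show ?thesis .
qed

theorem theorem1:
  fixes K S U T :: nat and \<pi>' :: policy
  assumes "K \<ge> 2" and "1 \<le> S" and "S < K" and "1 \<le> U" and "U < K" and "S = U"
    and "T \<ge> 1"
    and "valid_policy K S U \<pi>'"
  shows "(\<forall>\<pi>. valid_policy K S U \<pi> \<longrightarrow> avg_aoi K T \<pi>' \<le> avg_aoi K T \<pi>) \<longleftrightarrow>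
         ((\<forall>\<pi>. valid_policy K S U \<pi> \<longrightarrow> cum_RS T \<pi> \<le> cum_RS T \<pi>') \<and>
          (\<forall>t\<in>{1..T - 1}. (\<Sum>\<tau>=1..t - 1. RS \<pi>' \<tau>) = (\<Sum>\<tau>=1..t. RU \<pi>' \<tau>)))"
proof -
  have SK: "S \<le> K" using assms(3) by simp
  have K1: "K \<ge> 1" using assms(1) by simp
  let ?q = "pstar K S"
  have qv: "valid_policy K S U ?q" using pstar_valid[OF SK] assms(6) by simp
  have qcond: "\<forall>t\<in>{1..T - 1}. (\<Sum>\<tau>=1..t - 1. RS ?q \<tau>) = (\<Sum>\<tau>=1..t. RU ?q \<tau>)"
  proof
    fix t assume "t \<in> {1..T - 1}"
    then have "t = Suc (t - 1)" by auto
    then show "(\<Sum>\<tau>=1..t - 1. RS ?q \<tau>) = (\<Sum>\<tau>=1..t. RU ?q \<tau>)"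
      using pstar_eq[OF SK, of "t - 1"] by simp
  qed
  then have qF: "Fv T ?q = cum_RS T ?q" using F_eq_iff[OF qv] by blast
  have qmax: "cum_RS T p \<le> cum_RS T ?q" if "valid_policy K S U p" for p
    unfolding cum_RS_def by (rule sum_mono) (rule RS_compare[OF SK that])
  show ?thesis
  proof
    assume L: "\<forall>\<pi>. valid_policy K S U \<pi> \<longrightarrow> avg_aoi K T \<pi>' \<le> avg_aoi K T \<pi>"
    have "Fv T ?q \<le> Fv T \<pi>'" using L qv avg_iff[OF assms(8) qv assms(7) K1] by blast
    then have ch: "cum_RS T ?q \<le> cum_RS T \<pi>'" using qF F_le[OF assms(8), where T=T] by linarith
    have "Fv T \<pi>' = cum_RS T \<pi>'"
      using ch qF F_le[OF assms(8), where T=T] qmax[OF assms(8)] \<open>Fv T ?q \<le> Fv T \<pi>'\<close> by linarith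
    then have c2: "\<forall>t\<in>{1..T - 1}. (\<Sum>\<tau>=1..t - 1. RS \<pi>' \<tau>) = (\<Sum>\<tau>=1..t. RU \<pi>' \<tau>)"
      using F_eq_iff[OF assms(8)] by blast
    have "\<forall>\<pi>. valid_policy K S U \<pi> \<longrightarrow> cum_RS T \<pi> \<le> cum_RS T \<pi>'"
      using qmax ch by (meson order_trans)
    then show "(\<forall>\<pi>. valid_policy K S U \<pi> \<longrightarrow> cum_RS T \<pi> \<le> cum_RS T \<pi>') \<and>
          (\<forall>t\<in>{1..T - 1}. (\<Sum>\<tau>=1..t - 1. RS \<pi>' \<tau>) = (\<Sum>\<tau>=1..t. RU \<pi>' \<tau>))" using c2 by blast
  next
    assume R: "(\<forall>\<pi>. valid_policy K S U \<pi> \<longrightarrow> cum_RS T \<pi> \<le> cum_RS T \<pi>') \<and>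
          (\<forall>t\<in>{1..T - 1}. (\<Sum>\<tau>=1..t - 1. RS \<pi>' \<tau>) = (\<Sum>\<tau>=1..t. RU \<pi>' \<tau>))"
    then have e: "Fv T \<pi>' = cum_RS T \<pi>'" using F_eq_iff[OF assms(8)] by blast
    show "\<forall>\<pi>. valid_policy K S U \<pi> \<longrightarrow> avg_aoi K T \<pi>' \<le> avg_aoi K T \<pi>"
    proof (intro allI impI)
      fix p assume pv: "valid_policy K S U p"
      have "Fv T p \<le> Fv T \<pi>'" using F_le[OF pv, where T=T] R pv e by force
      then show "avg_aoi K T \<pi>' \<le> avg_aoi K T p" using avg_iff[OF assms(8) pv assms(7) K1] by blast
    qed
  qed
qed

end
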